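(* (i) For integers $p\geq 0$, $s\geq 2$, $t\geq 1$ and $n=s+t+p+1$, the graph $M_{n,n}^{s,t;-}$ is $2p$-Hamilton-biconnected. (ii) For integers $p\geq 0$ and $n\geq p+6$, the graph $N_{n,n}^{p,2}$ is $2p$-Hamilton-biconnected.
   Context: A bipartite graph $G=(X,Y;E)$ is balanced if $|X|=|Y|$; it is Hamilton-biconnected if for every $u\in X$, $v\in Y$ there is a Hamiltonian path with ends $u,v$. A vertex set $W$ is balanced if $|W\cap X|=|W\cap Y|$; $G$ is $2p$-Hamilton-biconnected if for every balanced $W$ with $|W|=2p$, the subgraph induced by $V(G)\setminus W$ is Hamilton-biconnected. $M_{n,m}^{s,t;-}$: the bipartite graph with parts $X=X_1\cup\{x_0\}\cup X_3$, $Y=Y_1\cup\{y_0\}\cup Y_3$ (disjoint), $|X_1|=s-1$, $|X_3|=n-s$, $|Y_1|=m-t-1$, $|Y_3|=t$, whose edges are all pairs between $X_1$ and $Y_1$, the edge $x_0y_0$, all pairs between $X_3$ and $Y_3$, all pairs between $x_0$ and $Y_1$, and all pairs between $X_3$ and $Y_1\cup\{y_0\}$. $N_{n,n}^{p,2}$: the balanced bipartite graph with parts $X=X_1\cup X_2\cup X_3$, $Y=Y_1\cup Y_2\cup Y_3$, $|X_1|=|Y_1|=n-p-3$, $|X_2|=|Y_2|=p+2$, $|X_3|=|Y_3|=1$, whose edges are all pairs between $X_1$ and $Y_1$, between $X_2$ and $Y_2$, between $X_1$ and $Y_2$, between $X_2$ and $Y_1\cup Y_3$, and between $X_3$ and $Y_2$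 (there is no edge between $X_3$ and $Y_3$). *)

theory Defs
  imports Main
begin

text \<open>A bipartite graph is given by its two (disjoint) parts X, Y and an adjacency
  relation E (assumed symmetric). The graph induced on a vertex set V uses the
  edges of E between vertices of V.\<close>

definition ham_path :: "('a \<Rightarrow> 'a \<Rightarrow> bool) \<Rightarrow> 'a set \<Rightarrow> 'a list \<Rightarrow> bool" where
  "ham_path E V xs \<longleftrightarrow> distinct xs \<and> set xs = V \<and>
     (\<forall>i. Suc i < length xs \<longrightarrow> E (xs ! i) (xs ! Suc i))"

definition hamilton_biconnected :: "'a set \<Rightarrow> 'a set \<Rightarrow> ('a \<Rightarrow> 'a \<Rightarrow> bool) \<Rightarrow> bool" where
  "hamilton_biconnected X Y E \<longleftrightarrow>
     (\<forall>u\<in>X. \<forall>v\<in>Y. \<exists>xs. ham_path E (X \<union> Y) xs \<and> xs \<noteq> [] \<and> hd xs = u \<and> last xs = v)"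

definition balanced_set :: "'a set \<Rightarrow> 'a set \<Rightarrow> 'a set \<Rightarrow> bool" where
  "balanced_set X Y W \<longleftrightarrow> card (W \<inter> X) = card (W \<inter> Y)"

definition hamilton_biconnected_2p :: "nat \<Rightarrow> 'a set \<Rightarrow> 'a set \<Rightarrow> ('a \<Rightarrow> 'a \<Rightarrow> bool) \<Rightarrow> bool" where
  "hamilton_biconnected_2p p X Y E \<longleftrightarrow>
     (\<forall>W. W \<subseteq> X \<union> Y \<and> finite W \<and> balanced_set X Y W \<and> card W = 2 * p \<longrightarrow>
          hamilton_biconnected (X - W) (Y - W) E)"

datatype mvert = MX1 nat | MX0 | MX3 nat | MY1 nat | MY0 | MY3 nat

definition M_X :: "nat \<Rightarrow> nat \<Rightarrow> nat \<Rightarrow> nat \<Rightarrow> mvert set" where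
  "M_X n m s t = {MX1 i | i. i < s - 1} \<union> {MX0} \<union> {MX3 i | i. i < n - s}"

definition M_Y :: "nat \<Rightarrow> nat \<Rightarrow> nat \<Rightarrow> nat \<Rightarrow> mvert set" where
  "M_Y n m s t = {MY1 i | i. i < m - t - 1} \<union> {MY0} \<union> {MY3 i | i. i < t}"

text \<open>Edges from the X side to the Y side (vertex ranges are enforced by M_X, M_Y).\<close>
fun M_adj0 :: "mvert \<Rightarrow> mvert \<Rightarrow> bool" where
  "M_adj0 (MX1 _) (MY1 _) = True"
| "M_adj0 MX0 MY0 = True"
| "M_adj0 (MX3 _) (MY3 _) = True"
| "M_adj0 MX0 (MY1 _) = True"
| "M_adj0 (MX3 _) (MY1 _) = True"
| "M_adj0 (MX3 _) MY0 = True"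
| "M_adj0 _ _ = False"

definition M_adj :: "mvert \<Rightarrow> mvert \<Rightarrow> bool" where
  "M_adj u v \<longleftrightarrow> M_adj0 u v \<or> M_adj0 v u"

datatype nvert = NX1 nat | NX2 nat | NX3 | NY1 nat | NY2 nat | NY3

definition N_X :: "nat \<Rightarrow> nat \<Rightarrow> nvert set" where
  "N_X n p = {NX1 i | i. i < n - p - 3} \<union> {NX2 i | i. i < p + 2} \<union> {NX3}"

definition N_Y :: "nat \<Rightarrow> nat \<Rightarrow> nvert set" where
  "N_Y n p = {NY1 i | i. i < n - p - 3} \<union> {NY2 i | i. i < p + 2} \<union> {NY3}"

fun N_adj0 :: "nvert \<Rightarrow> nvert \<Rightarrow> bool" where
  "N_adj0 (NX1 _) (NY1 _) = True"
| "N_adj0 (NX2 _) (NY2 _) = True"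
| "N_adj0 (NX1 _) (NY2 _) = True"
| "N_adj0 (NX2 _) (NY1 _) = True"
| "N_adj0 (NX2 _) NY3 = True"
| "N_adj0 NX3 (NY2 _) = True"
| "N_adj0 _ _ = False"

definition N_adj :: "nvert \<Rightarrow> nvert \<Rightarrow> bool" where
  "N_adj u v \<longleftrightarrow> N_adj0 u v \<or> N_adj0 v u"

end

theory Submission
  imports Defs
begin

definition ok :: "('c \<Rightarrow> 'c \<Rightarrow> bool) \<Rightarrow> 'c list \<Rightarrow> 'c \<Rightarrow> 'c \<Rightarrow> ('c \<Rightarrow> nat) \<Rightarrow> bool" where
  "ok R w st en cnt \<longleftrightarrow> w \<noteq> [] \<and> hd w = st \<and> last w = en \<and> successively R w \<and>
     (\<forall>c. count_list w c = cnt c)"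

lemma pump:
  assumes "ok R w st en cnt" "R c x" "R x c" "cnt c \<ge> 1" "x \<noteq> c"
  shows "\<exists>w'. ok R w' st en (cnt(x := Suc (cnt x), c := Suc (cnt c)))"
proof -
  have "count_list w c \<noteq> 0" using assms(1,4) unfolding ok_def by auto
  then have "c \<in> set w" by (simp add: count_list_0_iff)
  then obtain as bs where w: "w = as @ c # bs" by (meson split_list)
  define w' where "w' = as @ c # x # c # bs"
  have "w' \<noteq> []" "hd w' = st" "last w' = en"
    using assms(1) unfolding ok_def w w'_def by (auto simp: hd_append split: list.splits)
  moreover have "successively R w'"
  proof -
    have s: "successively R (as @ c # bs)" using assms(1) unfolding ok_def w by simp
    then have "successively R as" "successively R (c # bs)" "as = [] \<or> R (last as) c"
      by (auto simp: successively_append_iff)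
    then show ?thesis unfolding w'_def using assms(2,3)
      by (auto simp: successively_append_iff successively_Cons)
  qed
  moreover have "\<forall>d. count_list w' d = (cnt(x := Suc (cnt x), c := Suc (cnt c))) d"
  proof
    fix d
    have "count_list w d = cnt d" using assms(1) unfolding ok_def by blast
    then show "count_list w' d = (cnt(x := Suc (cnt x), c := Suc (cnt c))) d"
      using assms(5) unfolding w w'_def by (cases "d = x"; cases "d = c") auto
  qed
  ultimately show ?thesis unfolding ok_def by blast
qed

lemma card_minus_one:
  assumes "finite V" "y \<in> V"
  shows "card {x\<in>V - {y}. f x = d} = card {x\<in>V. f x = d} - (if f y = d then 1 else 0)"
proof -
  have "{x\<in>V - {y}. f x = d} = {x\<in>V. f x = d} - {y}" by auto
  then show ?thesis using assms by (auto simp: card_Diff_singleton_if)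
qed

lemma realize_any:
  "finite V \<Longrightarrow> (\<forall>c. count_list w c = card {x\<in>V. f x = c}) \<Longrightarrow>
    \<exists>xs. distinct xs \<and> set xs = V \<and> map f xs = w"
proof (induction w arbitrary: V)
  case Nil
  have "V = {}"
  proof (rule ccontr)
    assume "V \<noteq> {}" then obtain y where "y \<in> V" by blast
    then have "card {x\<in>V. f x = f y} \<noteq> 0" using Nil.prems(1) by auto
    then show False using Nil.prems(2) by (metis count_list.simps(1))
  qed
  then show ?case by auto
next
  case (Cons c w)
  have "card {x\<in>V. f x = c} \<noteq> 0" using Cons.prems(2)[rule_format, of c] by simp
  then obtain y where y: "y \<in> V" "f y = c" by (metis (mono_tags, lifting) Collect_empty_eq card.empty)
  have "\<forall>d. count_list w d = card {x\<in>V - {y}. f x = d}"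
  proof
    fix d show "count_list w d = card {x\<in>V - {y}. f x = d}"
      using Cons.prems(2)[rule_format, of d] card_minus_one[OF Cons.prems(1) y(1), of f d] y(2)
      by (auto split: if_splits)
  qed
  then obtain xs where "distinct xs" "set xs = V - {y}" "map f xs = w"
    using Cons.IH[of "V - {y}"] Cons.prems(1) by auto
  then show ?case using y by (intro exI[of _ "y # xs"]) auto
qed

lemma successively_nth:
  "successively P xs \<Longrightarrow> Suc i < length xs \<Longrightarrow> P (xs ! i) (xs ! Suc i)"
proof (induction xs arbitrary: i)
  case (Cons a xs)
  show ?case
  proof (cases i)
    case 0
    then show ?thesis using Cons.prems by (cases xs) auto
  next
    case (Suc j)
    then show ?thesis using Cons.prems Cons.IH[of j] by (cases xs) auto
  qed
qed auto

lemma realize: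
  assumes fin: "finite V" and uv: "u \<in> V" "v \<in> V" "f u \<noteq> f v"
    and E: "\<And>a b. E a b = R (f a) (f b)"
    and w: "ok R w (f u) (f v) (\<lambda>c. card {x\<in>V. f x = c})"
  shows "\<exists>xs. ham_path E V xs \<and> xs \<noteq> [] \<and> hd xs = u \<and> last xs = v"
proof -
  have une: "u \<noteq> v" using uv by auto
  from w have wne: "w \<noteq> []" and hw: "hd w = f u" and lw: "last w = f v"
    and sw: "successively R w" and cw: "\<forall>c. count_list w c = card {x\<in>V. f x = c}"
    unfolding ok_def by auto
  obtain w1 where w1: "w = f u # w1" using wne hw by (cases w) auto
  have "w1 \<noteq> []" using w1 lw uv(3) by auto
  then obtain w2 where w2: "w1 = w2 @ [f v]" using lw w1 by (metis append_butlast_last_id last.simps)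
  have V2: "\<forall>d. count_list w2 d = card {x\<in>V - {u} - {v}. f x = d}"
  proof
    fix d
    have v': "v \<in> V - {u}" using uv une by auto
    show "count_list w2 d = card {x\<in>V - {u} - {v}. f x = d}"
      using cw[rule_format, of d] card_minus_one[OF fin uv(1), of f d]
        card_minus_one[of "V - {u}" v f d] v' fin
      unfolding w1 w2 by (auto split: if_splits)
  qed
  obtain xs where xs: "distinct xs" "set xs = V - {u} - {v}" "map f xs = w2"
    using realize_any[OF _ V2] fin by auto
  define ys where "ys = u # xs @ [v]"
  have "distinct ys" "set ys = V" using xs uv une unfolding ys_def by auto
  moreover have "map f ys = w" unfolding ys_def w1 w2 using xs by simp
  then have ss: "successively (\<lambda>a b. R (f a) (f b)) ys" using sw by (simp add: successively_map[symmetric])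
  have "\<forall>i. Suc i < length ys \<longrightarrow> E (ys ! i) (ys ! Suc i)"
  proof (intro allI impI)
    fix i assume "Suc i < length ys"
    from successively_nth[OF ss this] show "E (ys ! i) (ys ! Suc i)" by (simp add: E)
  qed
  ultimately have "ham_path E V ys" unfolding ham_path_def by blast
  moreover have "ys \<noteq> []" "hd ys = u" "last ys = v" by (simp_all add: ys_def)
  ultimately show ?thesis by blast
qed

datatype mc = CX1 | CX0 | CX3 | CY1 | CY0 | CY3

fun MR0 :: "mc \<Rightarrow> mc \<Rightarrow> bool" where
  "MR0 CX1 CY1 = True"
| "MR0 CX0 CY0 = True"
| "MR0 CX3 CY3 = True"
| "MR0 CX0 CY1 = True"
| "MR0 CX3 CY1 = True"
| "MR0 CX3 CY0 = True"
| "MR0 _ _ = False"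

definition MR :: "mc \<Rightarrow> mc \<Rightarrow> bool" where
  "MR a b \<longleftrightarrow> MR0 a b \<or> MR0 b a"

lemma all_m: "(\<forall>c. P c) \<longleftrightarrow> P CX1 \<and> P CX0 \<and> P CX3 \<and> P CY1 \<and> P CY0 \<and> P CY3"
  by (metis mc.exhaust)

definition mkM :: "nat \<Rightarrow> nat \<Rightarrow> nat \<Rightarrow> nat \<Rightarrow> nat \<Rightarrow> nat \<Rightarrow> mc \<Rightarrow> nat" where
  "mkM a1 a0 a3 b1 b0 b3 c = (case c of CX1 \<Rightarrow> a1 | CX0 \<Rightarrow> a0 | CX3 \<Rightarrow> a3
      | CY1 \<Rightarrow> b1 | CY0 \<Rightarrow> b0 | CY3 \<Rightarrow> b3)"

lemma mkM_simps:
  "mkM a1 a0 a3 b1 b0 b3 CX1 = a1" "mkM a1 a0 a3 b1 b0 b3 CX0 = a0" "mkM a1 a0 a3 b1 b0 b3 CX3 = a3"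
  "mkM a1 a0 a3 b1 b0 b3 CY1 = b1" "mkM a1 a0 a3 b1 b0 b3 CY0 = b0" "mkM a1 a0 a3 b1 b0 b3 CY3 = b3"
  by (simp_all add: mkM_def)

declare MR_def[simp]

lemma M_004400_CX3_CY1: "\<exists>w. ok MR w CX3 CY1 (mkM 0 0 4 4 0 0)"
  by (rule exI[of _ "[CX3, CY1, CX3, CY1, CX3, CY1, CX3, CY1]"]) (simp add: ok_def mkM_simps all_m)

lemma M_004310_CX3_CY1: "\<exists>w. ok MR w CX3 CY1 (mkM 0 0 4 3 1 0)"
  by (rule exI[of _ "[CX3, CY0, CX3, CY1, CX3, CY1, CX3, CY1]"]) (simp add: ok_def mkM_simps all_m)

lemma M_004310_CX3_CY0: "\<exists>w. ok MR w CX3 CY0 (mkM 0 0 4 3 1 0)"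
  by (rule exI[of _ "[CX3, CY1, CX3, CY1, CX3, CY1, CX3, CY0]"]) (simp add: ok_def mkM_simps all_m)

lemma M_004301_CX3_CY1: "\<exists>w. ok MR w CX3 CY1 (mkM 0 0 4 3 0 1)"
  by (rule exI[of _ "[CX3, CY1, CX3, CY1, CX3, CY3, CX3, CY1]"]) (simp add: ok_def mkM_simps all_m)

lemma M_004301_CX3_CY3: "\<exists>w. ok MR w CX3 CY3 (mkM 0 0 4 3 0 1)"
  by (rule exI[of _ "[CX3, CY1, CX3, CY1, CX3, CY1, CX3, CY3]"]) (simp add: ok_def mkM_simps all_m)

lemma M_004211_CX3_CY1: "\<exists>w. ok MR w CX3 CY1 (mkM 0 0 4 2 1 1)"
  by (rule exI[of _ "[CX3, CY0, CX3, CY1, CX3, CY3, CX3, CY1]"]) (simp add: ok_def mkM_simps all_m)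

lemma M_004211_CX3_CY0: "\<exists>w. ok MR w CX3 CY0 (mkM 0 0 4 2 1 1)"
  by (rule exI[of _ "[CX3, CY1, CX3, CY1, CX3, CY3, CX3, CY0]"]) (simp add: ok_def mkM_simps all_m)

lemma M_004211_CX3_CY3: "\<exists>w. ok MR w CX3 CY3 (mkM 0 0 4 2 1 1)"
  by (rule exI[of _ "[CX3, CY0, CX3, CY1, CX3, CY1, CX3, CY3]"]) (simp add: ok_def mkM_simps all_m)

lemma M_013400_CX0_CY1: "\<exists>w. ok MR w CX0 CY1 (mkM 0 1 3 4 0 0)"
  by (rule exI[of _ "[CX0, CY1, CX3, CY1, CX3, CY1, CX3, CY1]"]) (simp add: ok_def mkM_simps all_m)

lemma M_013400_CX3_CY1: "\<exists>w. ok MR w CX3 CY1 (mkM 0 1 3 4 0 0)"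
  by (rule exI[of _ "[CX3, CY1, CX0, CY1, CX3, CY1, CX3, CY1]"]) (simp add: ok_def mkM_simps all_m)

lemma M_013310_CX0_CY1: "\<exists>w. ok MR w CX0 CY1 (mkM 0 1 3 3 1 0)"
  by (rule exI[of _ "[CX0, CY0, CX3, CY1, CX3, CY1, CX3, CY1]"]) (simp add: ok_def mkM_simps all_m)

lemma M_013310_CX0_CY0: "\<exists>w. ok MR w CX0 CY0 (mkM 0 1 3 3 1 0)"
  by (rule exI[of _ "[CX0, CY1, CX3, CY1, CX3, CY1, CX3, CY0]"]) (simp add: ok_def mkM_simps all_m)

lemma M_013310_CX3_CY1: "\<exists>w. ok MR w CX3 CY1 (mkM 0 1 3 3 1 0)"
  by (rule exI[of _ "[CX3, CY0, CX0, CY1, CX3, CY1, CX3, CY1]"]) (simp add: ok_def mkM_simps all_m)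

lemma M_013310_CX3_CY0: "\<exists>w. ok MR w CX3 CY0 (mkM 0 1 3 3 1 0)"
  by (rule exI[of _ "[CX3, CY1, CX0, CY1, CX3, CY1, CX3, CY0]"]) (simp add: ok_def mkM_simps all_m)

lemma M_013301_CX0_CY1: "\<exists>w. ok MR w CX0 CY1 (mkM 0 1 3 3 0 1)"
  by (rule exI[of _ "[CX0, CY1, CX3, CY1, CX3, CY3, CX3, CY1]"]) (simp add: ok_def mkM_simps all_m)

lemma M_013301_CX0_CY3: "\<exists>w. ok MR w CX0 CY3 (mkM 0 1 3 3 0 1)"
  by (rule exI[of _ "[CX0, CY1, CX3, CY1, CX3, CY1, CX3, CY3]"]) (simp add: ok_def mkM_simps all_m)

lemma M_013301_CX3_CY1: "\<exists>w. ok MR w CX3 CY1 (mkM 0 1 3 3 0 1)"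
  by (rule exI[of _ "[CX3, CY1, CX0, CY1, CX3, CY3, CX3, CY1]"]) (simp add: ok_def mkM_simps all_m)

lemma M_013301_CX3_CY3: "\<exists>w. ok MR w CX3 CY3 (mkM 0 1 3 3 0 1)"
  by (rule exI[of _ "[CX3, CY1, CX0, CY1, CX3, CY1, CX3, CY3]"]) (simp add: ok_def mkM_simps all_m)

lemma M_013211_CX0_CY1: "\<exists>w. ok MR w CX0 CY1 (mkM 0 1 3 2 1 1)"
  by (rule exI[of _ "[CX0, CY0, CX3, CY1, CX3, CY3, CX3, CY1]"]) (simp add: ok_def mkM_simps all_m)

lemma M_013211_CX0_CY0: "\<exists>w. ok MR w CX0 CY0 (mkM 0 1 3 2 1 1)"
  by (rule exI[of _ "[CX0, CY1, CX3, CY1, CX3, CY3, CX3, CY0]"]) (simp add: ok_def mkM_simps all_m)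

lemma M_013211_CX0_CY3: "\<exists>w. ok MR w CX0 CY3 (mkM 0 1 3 2 1 1)"
  by (rule exI[of _ "[CX0, CY0, CX3, CY1, CX3, CY1, CX3, CY3]"]) (simp add: ok_def mkM_simps all_m)

lemma M_013211_CX3_CY1: "\<exists>w. ok MR w CX3 CY1 (mkM 0 1 3 2 1 1)"
  by (rule exI[of _ "[CX3, CY0, CX0, CY1, CX3, CY3, CX3, CY1]"]) (simp add: ok_def mkM_simps all_m)

lemma M_013211_CX3_CY0: "\<exists>w. ok MR w CX3 CY0 (mkM 0 1 3 2 1 1)"
  by (rule exI[of _ "[CX3, CY1, CX0, CY1, CX3, CY3, CX3, CY0]"]) (simp add: ok_def mkM_simps all_m)

lemma M_013211_CX3_CY3: "\<exists>w. ok MR w CX3 CY3 (mkM 0 1 3 2 1 1)"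
  by (rule exI[of _ "[CX3, CY0, CX0, CY1, CX3, CY1, CX3, CY3]"]) (simp add: ok_def mkM_simps all_m)

lemma M_103400_CX1_CY1: "\<exists>w. ok MR w CX1 CY1 (mkM 1 0 3 4 0 0)"
  by (rule exI[of _ "[CX1, CY1, CX3, CY1, CX3, CY1, CX3, CY1]"]) (simp add: ok_def mkM_simps all_m)

lemma M_103400_CX3_CY1: "\<exists>w. ok MR w CX3 CY1 (mkM 1 0 3 4 0 0)"
  by (rule exI[of _ "[CX3, CY1, CX1, CY1, CX3, CY1, CX3, CY1]"]) (simp add: ok_def mkM_simps all_m)

lemma M_103310_CX1_CY1: "\<exists>w. ok MR w CX1 CY1 (mkM 1 0 3 3 1 0)"
  by (rule exI[of _ "[CX1, CY1, CX3, CY0, CX3, CY1, CX3, CY1]"]) (simp add: ok_def mkM_simps all_m)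

lemma M_103310_CX1_CY0: "\<exists>w. ok MR w CX1 CY0 (mkM 1 0 3 3 1 0)"
  by (rule exI[of _ "[CX1, CY1, CX3, CY1, CX3, CY1, CX3, CY0]"]) (simp add: ok_def mkM_simps all_m)

lemma M_103310_CX3_CY1: "\<exists>w. ok MR w CX3 CY1 (mkM 1 0 3 3 1 0)"
  by (rule exI[of _ "[CX3, CY0, CX3, CY1, CX1, CY1, CX3, CY1]"]) (simp add: ok_def mkM_simps all_m)

lemma M_103310_CX3_CY0: "\<exists>w. ok MR w CX3 CY0 (mkM 1 0 3 3 1 0)"
  by (rule exI[of _ "[CX3, CY1, CX1, CY1, CX3, CY1, CX3, CY0]"]) (simp add: ok_def mkM_simps all_m)

lemma M_103301_CX1_CY1: "\<exists>w. ok MR w CX1 CY1 (mkM 1 0 3 3 0 1)"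
  by (rule exI[of _ "[CX1, CY1, CX3, CY1, CX3, CY3, CX3, CY1]"]) (simp add: ok_def mkM_simps all_m)

lemma M_103301_CX1_CY3: "\<exists>w. ok MR w CX1 CY3 (mkM 1 0 3 3 0 1)"
  by (rule exI[of _ "[CX1, CY1, CX3, CY1, CX3, CY1, CX3, CY3]"]) (simp add: ok_def mkM_simps all_m)

lemma M_103301_CX3_CY1: "\<exists>w. ok MR w CX3 CY1 (mkM 1 0 3 3 0 1)"
  by (rule exI[of _ "[CX3, CY1, CX1, CY1, CX3, CY3, CX3, CY1]"]) (simp add: ok_def mkM_simps all_m)

lemma M_103301_CX3_CY3: "\<exists>w. ok MR w CX3 CY3 (mkM 1 0 3 3 0 1)"
  by (rule exI[of _ "[CX3, CY1, CX1, CY1, CX3, CY1, CX3, CY3]"]) (simp add: ok_def mkM_simps all_m)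

lemma M_103211_CX1_CY1: "\<exists>w. ok MR w CX1 CY1 (mkM 1 0 3 2 1 1)"
  by (rule exI[of _ "[CX1, CY1, CX3, CY0, CX3, CY3, CX3, CY1]"]) (simp add: ok_def mkM_simps all_m)

lemma M_103211_CX1_CY0: "\<exists>w. ok MR w CX1 CY0 (mkM 1 0 3 2 1 1)"
  by (rule exI[of _ "[CX1, CY1, CX3, CY1, CX3, CY3, CX3, CY0]"]) (simp add: ok_def mkM_simps all_m)

lemma M_103211_CX1_CY3: "\<exists>w. ok MR w CX1 CY3 (mkM 1 0 3 2 1 1)"
  by (rule exI[of _ "[CX1, CY1, CX3, CY0, CX3, CY1, CX3, CY3]"]) (simp add: ok_def mkM_simps all_m)

lemma M_103211_CX3_CY1: "\<exists>w. ok MR w CX3 CY1 (mkM 1 0 3 2 1 1)"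
  by (rule exI[of _ "[CX3, CY0, CX3, CY3, CX3, CY1, CX1, CY1]"]) (simp add: ok_def mkM_simps all_m)

lemma M_103211_CX3_CY0: "\<exists>w. ok MR w CX3 CY0 (mkM 1 0 3 2 1 1)"
  by (rule exI[of _ "[CX3, CY1, CX1, CY1, CX3, CY3, CX3, CY0]"]) (simp add: ok_def mkM_simps all_m)

lemma M_103211_CX3_CY3: "\<exists>w. ok MR w CX3 CY3 (mkM 1 0 3 2 1 1)"
  by (rule exI[of _ "[CX3, CY0, CX3, CY1, CX1, CY1, CX3, CY3]"]) (simp add: ok_def mkM_simps all_m)

lemma M_112400_CX1_CY1: "\<exists>w. ok MR w CX1 CY1 (mkM 1 1 2 4 0 0)"
  by (rule exI[of _ "[CX1, CY1, CX0, CY1, CX3, CY1, CX3, CY1]"]) (simp add: ok_def mkM_simps all_m)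

lemma M_112400_CX0_CY1: "\<exists>w. ok MR w CX0 CY1 (mkM 1 1 2 4 0 0)"
  by (rule exI[of _ "[CX0, CY1, CX1, CY1, CX3, CY1, CX3, CY1]"]) (simp add: ok_def mkM_simps all_m)

lemma M_112400_CX3_CY1: "\<exists>w. ok MR w CX3 CY1 (mkM 1 1 2 4 0 0)"
  by (rule exI[of _ "[CX3, CY1, CX0, CY1, CX1, CY1, CX3, CY1]"]) (simp add: ok_def mkM_simps all_m)

lemma M_112310_CX1_CY1: "\<exists>w. ok MR w CX1 CY1 (mkM 1 1 2 3 1 0)"
  by (rule exI[of _ "[CX1, CY1, CX0, CY0, CX3, CY1, CX3, CY1]"]) (simp add: ok_def mkM_simps all_m)

lemma M_112310_CX1_CY0: "\<exists>w. ok MR w CX1 CY0 (mkM 1 1 2 3 1 0)"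
  by (rule exI[of _ "[CX1, CY1, CX0, CY1, CX3, CY1, CX3, CY0]"]) (simp add: ok_def mkM_simps all_m)

lemma M_112310_CX0_CY1: "\<exists>w. ok MR w CX0 CY1 (mkM 1 1 2 3 1 0)"
  by (rule exI[of _ "[CX0, CY0, CX3, CY1, CX1, CY1, CX3, CY1]"]) (simp add: ok_def mkM_simps all_m)

lemma M_112310_CX0_CY0: "\<exists>w. ok MR w CX0 CY0 (mkM 1 1 2 3 1 0)"
  by (rule exI[of _ "[CX0, CY1, CX1, CY1, CX3, CY1, CX3, CY0]"]) (simp add: ok_def mkM_simps all_m)

lemma M_112310_CX3_CY1: "\<exists>w. ok MR w CX3 CY1 (mkM 1 1 2 3 1 0)"
  by (rule exI[of _ "[CX3, CY0, CX0, CY1, CX1, CY1, CX3, CY1]"]) (simp add: ok_def mkM_simps all_m)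

lemma M_112310_CX3_CY0: "\<exists>w. ok MR w CX3 CY0 (mkM 1 1 2 3 1 0)"
  by (rule exI[of _ "[CX3, CY1, CX0, CY1, CX1, CY1, CX3, CY0]"]) (simp add: ok_def mkM_simps all_m)

lemma M_112301_CX1_CY1: "\<exists>w. ok MR w CX1 CY1 (mkM 1 1 2 3 0 1)"
  by (rule exI[of _ "[CX1, CY1, CX0, CY1, CX3, CY3, CX3, CY1]"]) (simp add: ok_def mkM_simps all_m)

lemma M_112301_CX1_CY3: "\<exists>w. ok MR w CX1 CY3 (mkM 1 1 2 3 0 1)"
  by (rule exI[of _ "[CX1, CY1, CX0, CY1, CX3, CY1, CX3, CY3]"]) (simp add: ok_def mkM_simps all_m)

lemma M_112301_CX0_CY1: "\<exists>w. ok MR w CX0 CY1 (mkM 1 1 2 3 0 1)"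
  by (rule exI[of _ "[CX0, CY1, CX1, CY1, CX3, CY3, CX3, CY1]"]) (simp add: ok_def mkM_simps all_m)

lemma M_112301_CX0_CY3: "\<exists>w. ok MR w CX0 CY3 (mkM 1 1 2 3 0 1)"
  by (rule exI[of _ "[CX0, CY1, CX1, CY1, CX3, CY1, CX3, CY3]"]) (simp add: ok_def mkM_simps all_m)

lemma M_112301_CX3_CY1: "\<exists>w. ok MR w CX3 CY1 (mkM 1 1 2 3 0 1)"
  by (rule exI[of _ "[CX3, CY3, CX3, CY1, CX0, CY1, CX1, CY1]"]) (simp add: ok_def mkM_simps all_m)

lemma M_112301_CX3_CY3: "\<exists>w. ok MR w CX3 CY3 (mkM 1 1 2 3 0 1)"
  by (rule exI[of _ "[CX3, CY1, CX0, CY1, CX1, CY1, CX3, CY3]"]) (simp add: ok_def mkM_simps all_m)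

lemma M_112211_CX1_CY1: "\<exists>w. ok MR w CX1 CY1 (mkM 1 1 2 2 1 1)"
  by (rule exI[of _ "[CX1, CY1, CX0, CY0, CX3, CY3, CX3, CY1]"]) (simp add: ok_def mkM_simps all_m)

lemma M_112211_CX1_CY0: "\<exists>w. ok MR w CX1 CY0 (mkM 1 1 2 2 1 1)"
  by (rule exI[of _ "[CX1, CY1, CX0, CY1, CX3, CY3, CX3, CY0]"]) (simp add: ok_def mkM_simps all_m)

lemma M_112211_CX1_CY3: "\<exists>w. ok MR w CX1 CY3 (mkM 1 1 2 2 1 1)"
  by (rule exI[of _ "[CX1, CY1, CX0, CY0, CX3, CY1, CX3, CY3]"]) (simp add: ok_def mkM_simps all_m)

lemma M_112211_CX0_CY1: "\<exists>w. ok MR w CX0 CY1 (mkM 1 1 2 2 1 1)"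
  by (rule exI[of _ "[CX0, CY0, CX3, CY3, CX3, CY1, CX1, CY1]"]) (simp add: ok_def mkM_simps all_m)

lemma M_112211_CX0_CY0: "\<exists>w. ok MR w CX0 CY0 (mkM 1 1 2 2 1 1)"
  by (rule exI[of _ "[CX0, CY1, CX1, CY1, CX3, CY3, CX3, CY0]"]) (simp add: ok_def mkM_simps all_m)

lemma M_112211_CX0_CY3: "\<exists>w. ok MR w CX0 CY3 (mkM 1 1 2 2 1 1)"
  by (rule exI[of _ "[CX0, CY0, CX3, CY1, CX1, CY1, CX3, CY3]"]) (simp add: ok_def mkM_simps all_m)

lemma M_112211_CX3_CY1: "\<exists>w. ok MR w CX3 CY1 (mkM 1 1 2 2 1 1)"
  by (rule exI[of _ "[CX3, CY3, CX3, CY0, CX0, CY1, CX1, CY1]"]) (simp add: ok_def mkM_simps all_m)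

lemma M_112211_CX3_CY0: "\<exists>w. ok MR w CX3 CY0 (mkM 1 1 2 2 1 1)"
  by (rule exI[of _ "[CX3, CY3, CX3, CY1, CX1, CY1, CX0, CY0]"]) (simp add: ok_def mkM_simps all_m)

lemma M_112211_CX3_CY3: "\<exists>w. ok MR w CX3 CY3 (mkM 1 1 2 2 1 1)"
  by (rule exI[of _ "[CX3, CY0, CX0, CY1, CX1, CY1, CX3, CY3]"]) (simp add: ok_def mkM_simps all_m)

lemmas Mbase_facts = M_004400_CX3_CY1 M_004310_CX3_CY1 M_004310_CX3_CY0 M_004301_CX3_CY1 M_004301_CX3_CY3 M_004211_CX3_CY1 M_004211_CX3_CY0 M_004211_CX3_CY3 M_013400_CX0_CY1 M_013400_CX3_CY1 M_013310_CX0_CY1 M_013310_CX0_CY0 M_013310_CX3_CY1 M_013310_CX3_CY0 M_013301_CX0_CY1 M_013301_CX0_CY3 M_013301_CX3_CY1 M_013301_CX3_CY3 M_013211_CX0_CY1 M_013211_CX0_CY0 M_013211_CX0_CY3 M_013211_CX3_CY1 M_013211_CX3_CY0 M_013211_CX3_CY3 M_103400_CX1_CY1 M_103400_CX3_CY1 M_103310_CX1_CY1 M_103310_CX1_CY0 M_103310_CX3_CY1 M_103310_CX3_CY0 M_103301_CX1_CY1 M_103301_CX1_CY3 M_103301_CX3_CY1 M_103301_CX3_CY3 M_103211_CX1_CY1 M_103211_CX1_CY0 M_103211_CX1_CY3 M_103211_CX3_CY1 M_103211_CX3_CY0 M_103211_CX3_CY3 M_112400_CX1_CY1 M_112400_CX0_CY1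 M_112400_CX3_CY1 M_112310_CX1_CY1 M_112310_CX1_CY0 M_112310_CX0_CY1 M_112310_CX0_CY0 M_112310_CX3_CY1 M_112310_CX3_CY0 M_112301_CX1_CY1 M_112301_CX1_CY3 M_112301_CX0_CY1 M_112301_CX0_CY3 M_112301_CX3_CY1 M_112301_CX3_CY3 M_112211_CX1_CY1 M_112211_CX1_CY0 M_112211_CX1_CY3 M_112211_CX0_CY1 M_112211_CX0_CY0 M_112211_CX0_CY3 M_112211_CX3_CY1 M_112211_CX3_CY0 M_112211_CX3_CY3

lemma M_base:
  assumes "a1 \<le> 1" "a0 \<le> 1" "b3 \<le> 1" "b0 \<le> 1" "a1 + a0 + a3 = 4" "b1 + b0 + b3 = 4"
    "st \<in> {CX1, CX0, CX3}" "en \<in> {CY1, CY0, CY3}"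
    "mkM a1 a0 a3 b1 b0 b3 st \<ge> 1" "mkM a1 a0 a3 b1 b0 b3 en \<ge> 1"
  shows "\<exists>w. ok MR w st en (mkM a1 a0 a3 b1 b0 b3)"
proof -
  have "a1 \<in> {0,1}" "a0 \<in> {0,1}" "b3 \<in> {0,1}" "b0 \<in> {0,1}"
    using assms by auto
  moreover have "a3 = 4 - a1 - a0" "b1 = 4 - b0 - b3" using assms by auto
  ultimately show ?thesis using assms(7-10)
    by (auto simp: mkM_simps Mbase_facts Mbase_facts[unfolded One_nat_def])
qed

lemma step:
  assumes "\<exists>w. ok R w st en c'" "c = c'(x := Suc (c' x), y := Suc (c' y))" "R x y" "R y x"
    "c' y \<ge> 1" "x \<noteq> y"
  shows "\<exists>w. ok R w st en c"
  using assms pump[of R _ st en c' y x] by auto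

lemma M_words:
  "a1 + a0 + a3 = N \<Longrightarrow> b1 + b0 + b3 = N \<Longrightarrow> 4 \<le> N \<Longrightarrow> a1 + 3 \<le> N \<Longrightarrow> b3 + 3 \<le> N \<Longrightarrow>
   a1 + b3 + 2 \<le> N \<Longrightarrow> a0 \<le> 1 \<Longrightarrow> b0 \<le> 1 \<Longrightarrow> st \<in> {CX1, CX0, CX3} \<Longrightarrow> en \<in> {CY1, CY0, CY3} \<Longrightarrow>
   mkM a1 a0 a3 b1 b0 b3 st \<ge> 1 \<Longrightarrow> mkM a1 a0 a3 b1 b0 b3 en \<ge> 1 \<Longrightarrow>
   \<exists>w. ok MR w st en (mkM a1 a0 a3 b1 b0 b3)"
proof (induction N arbitrary: a1 a0 a3 b1 b0 b3)
  case 0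
  then show ?case by simp
next
  case (Suc m)
  note P = Suc.prems
  show ?case
  proof (cases "m = 3")
    case True
    then show ?thesis using P by (intro M_base) auto
  next
    case False
    then have m4: "m \<ge> 4" using P by auto
    show ?thesis
    proof (cases "b3 + 3 = Suc m")
      case R1: True
      have "\<exists>w. ok MR w st en (mkM a1 a0 (a3 - 1) b1 b0 (b3 - 1))"
      proof (rule Suc.IH)
        show "mkM a1 a0 (a3 - 1) b1 b0 (b3 - 1) st \<ge> 1" using P R1 m4 by (auto simp: mkM_simps)
        show "mkM a1 a0 (a3 - 1) b1 b0 (b3 - 1) en \<ge> 1" using P R1 m4 by (auto simp: mkM_simps)
      qed (use P R1 m4 in auto)
      then show ?thesis
      proof (rule step[where x = CX3 and y = CY3])
        show "mkM a1 a0 a3 b1 b0 b3 = (mkM a1 a0 (a3 - 1) b1 b0 (b3 - 1))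
          (CX3 := Suc (mkM a1 a0 (a3 - 1) b1 b0 (b3 - 1) CX3), CY3 := Suc (mkM a1 a0 (a3 - 1) b1 b0 (b3 - 1) CY3))"
          using P R1 m4 by (auto simp: fun_eq_iff mkM_def split: mc.splits)
      qed (use P R1 m4 in \<open>auto simp: mkM_simps\<close>)
    next
      case nR1: False
      show ?thesis
      proof (cases "a1 + 3 = Suc m \<or> a1 + b3 + 2 = Suc m")
        case R2: True
        have "\<exists>w. ok MR w st en (mkM (a1 - 1) a0 a3 (b1 - 1) b0 b3)"
        proof (rule Suc.IH)
          show "mkM (a1 - 1) a0 a3 (b1 - 1) b0 b3 st \<ge> 1" using P R2 nR1 m4 by (auto simp: mkM_simps)
          show "mkM (a1 - 1) a0 a3 (b1 - 1) b0 b3 en \<ge> 1" using P R2 nR1 m4 by (auto simp: mkM_simps)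
        qed (use P R2 nR1 m4 in auto)
        then show ?thesis
        proof (rule step[where x = CX1 and y = CY1])
          show "mkM a1 a0 a3 b1 b0 b3 = (mkM (a1 - 1) a0 a3 (b1 - 1) b0 b3)
            (CX1 := Suc (mkM (a1 - 1) a0 a3 (b1 - 1) b0 b3 CX1), CY1 := Suc (mkM (a1 - 1) a0 a3 (b1 - 1) b0 b3 CY1))"
            using P R2 nR1 m4 by (auto simp: fun_eq_iff mkM_def split: mc.splits)
        qed (use P R2 nR1 m4 in \<open>auto simp: mkM_simps\<close>)
      next
        case nR2: False
        have "\<exists>w. ok MR w st en (mkM a1 a0 (a3 - 1) (b1 - 1) b0 b3)"
        proof (rule Suc.IH)
          show "mkM a1 a0 (a3 - 1) (b1 - 1) b0 b3 st \<ge> 1" using P nR2 nR1 m4 by (auto simp: mkM_simps)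
          show "mkM a1 a0 (a3 - 1) (b1 - 1) b0 b3 en \<ge> 1" using P nR2 nR1 m4 by (auto simp: mkM_simps)
        qed (use P nR2 nR1 m4 in auto)
        then show ?thesis
        proof (rule step[where x = CX3 and y = CY1])
          show "mkM a1 a0 a3 b1 b0 b3 = (mkM a1 a0 (a3 - 1) (b1 - 1) b0 b3)
            (CX3 := Suc (mkM a1 a0 (a3 - 1) (b1 - 1) b0 b3 CX3), CY1 := Suc (mkM a1 a0 (a3 - 1) (b1 - 1) b0 b3 CY1))"
            using P nR2 nR1 m4 by (auto simp: fun_eq_iff mkM_def split: mc.splits)
        qed (use P nR2 nR1 m4 in \<open>auto simp: mkM_simps\<close>)
      qed
    qed
  qed
qed

datatype nc = DX1 | DX2 | DX3 | DY1 | DY2 | DY3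

fun NR0 :: "nc \<Rightarrow> nc \<Rightarrow> bool" where
  "NR0 DX1 DY1 = True"
| "NR0 DX2 DY2 = True"
| "NR0 DX1 DY2 = True"
| "NR0 DX2 DY1 = True"
| "NR0 DX2 DY3 = True"
| "NR0 DX3 DY2 = True"
| "NR0 _ _ = False"

definition NR :: "nc \<Rightarrow> nc \<Rightarrow> bool" where
  "NR a b \<longleftrightarrow> NR0 a b \<or> NR0 b a"

lemma all_n: "(\<forall>c. P c) \<longleftrightarrow> P DX1 \<and> P DX2 \<and> P DX3 \<and> P DY1 \<and> P DY2 \<and> P DY3"
  by (metis nc.exhaust)

definition mkN :: "nat \<Rightarrow> nat \<Rightarrow> nat \<Rightarrow> nat \<Rightarrow> nat \<Rightarrow> nat \<Rightarrow> nc \<Rightarrow> nat" where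
  "mkN a1 a2 a3 b1 b2 b3 c = (case c of DX1 \<Rightarrow> a1 | DX2 \<Rightarrow> a2 | DX3 \<Rightarrow> a3
      | DY1 \<Rightarrow> b1 | DY2 \<Rightarrow> b2 | DY3 \<Rightarrow> b3)"

lemma mkN_simps:
  "mkN a1 a2 a3 b1 b2 b3 DX1 = a1" "mkN a1 a2 a3 b1 b2 b3 DX2 = a2" "mkN a1 a2 a3 b1 b2 b3 DX3 = a3"
  "mkN a1 a2 a3 b1 b2 b3 DY1 = b1" "mkN a1 a2 a3 b1 b2 b3 DY2 = b2" "mkN a1 a2 a3 b1 b2 b3 DY3 = b3"
  by (simp_all add: mkN_def)

declare NR_def[simp]

lemma N_040040_DX2_DY2: "\<exists>w. ok NR w DX2 DY2 (mkN 0 4 0 0 4 0)"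
  by (rule exI[of _ "[DX2, DY2, DX2, DY2, DX2, DY2, DX2, DY2]"]) (simp add: ok_def mkN_simps all_n)

lemma N_040031_DX2_DY2: "\<exists>w. ok NR w DX2 DY2 (mkN 0 4 0 0 3 1)"
  by (rule exI[of _ "[DX2, DY2, DX2, DY2, DX2, DY3, DX2, DY2]"]) (simp add: ok_def mkN_simps all_n)

lemma N_040031_DX2_DY3: "\<exists>w. ok NR w DX2 DY3 (mkN 0 4 0 0 3 1)"
  by (rule exI[of _ "[DX2, DY2, DX2, DY2, DX2, DY2, DX2, DY3]"]) (simp add: ok_def mkN_simps all_n)

lemma N_040130_DX2_DY1: "\<exists>w. ok NR w DX2 DY1 (mkN 0 4 0 1 3 0)"
  by (rule exI[of _ "[DX2, DY2, DX2, DY2, DX2, DY2, DX2, DY1]"]) (simp add: ok_def mkN_simps all_n)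

lemma N_040130_DX2_DY2: "\<exists>w. ok NR w DX2 DY2 (mkN 0 4 0 1 3 0)"
  by (rule exI[of _ "[DX2, DY1, DX2, DY2, DX2, DY2, DX2, DY2]"]) (simp add: ok_def mkN_simps all_n)

lemma N_040121_DX2_DY1: "\<exists>w. ok NR w DX2 DY1 (mkN 0 4 0 1 2 1)"
  by (rule exI[of _ "[DX2, DY2, DX2, DY2, DX2, DY3, DX2, DY1]"]) (simp add: ok_def mkN_simps all_n)

lemma N_040121_DX2_DY2: "\<exists>w. ok NR w DX2 DY2 (mkN 0 4 0 1 2 1)"
  by (rule exI[of _ "[DX2, DY1, DX2, DY2, DX2, DY3, DX2, DY2]"]) (simp add: ok_def mkN_simps all_n)

lemma N_040121_DX2_DY3: "\<exists>w. ok NR w DX2 DY3 (mkN 0 4 0 1 2 1)"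
  by (rule exI[of _ "[DX2, DY1, DX2, DY2, DX2, DY2, DX2, DY3]"]) (simp add: ok_def mkN_simps all_n)

lemma N_031040_DX2_DY2: "\<exists>w. ok NR w DX2 DY2 (mkN 0 3 1 0 4 0)"
  by (rule exI[of _ "[DX2, DY2, DX2, DY2, DX2, DY2, DX3, DY2]"]) (simp add: ok_def mkN_simps all_n)

lemma N_031040_DX3_DY2: "\<exists>w. ok NR w DX3 DY2 (mkN 0 3 1 0 4 0)"
  by (rule exI[of _ "[DX3, DY2, DX2, DY2, DX2, DY2, DX2, DY2]"]) (simp add: ok_def mkN_simps all_n)

lemma N_031031_DX2_DY2: "\<exists>w. ok NR w DX2 DY2 (mkN 0 3 1 0 3 1)"
  by (rule exI[of _ "[DX2, DY2, DX2, DY3, DX2, DY2, DX3, DY2]"]) (simp add: ok_def mkN_simps all_n)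

lemma N_031031_DX2_DY3: "\<exists>w. ok NR w DX2 DY3 (mkN 0 3 1 0 3 1)"
  by (rule exI[of _ "[DX2, DY2, DX2, DY2, DX3, DY2, DX2, DY3]"]) (simp add: ok_def mkN_simps all_n)

lemma N_031031_DX3_DY2: "\<exists>w. ok NR w DX3 DY2 (mkN 0 3 1 0 3 1)"
  by (rule exI[of _ "[DX3, DY2, DX2, DY2, DX2, DY3, DX2, DY2]"]) (simp add: ok_def mkN_simps all_n)

lemma N_031031_DX3_DY3: "\<exists>w. ok NR w DX3 DY3 (mkN 0 3 1 0 3 1)"
  by (rule exI[of _ "[DX3, DY2, DX2, DY2, DX2, DY2, DX2, DY3]"]) (simp add: ok_def mkN_simps all_n)

lemma N_031130_DX2_DY1: "\<exists>w. ok NR w DX2 DY1 (mkN 0 3 1 1 3 0)"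
  by (rule exI[of _ "[DX2, DY2, DX2, DY2, DX3, DY2, DX2, DY1]"]) (simp add: ok_def mkN_simps all_n)

lemma N_031130_DX2_DY2: "\<exists>w. ok NR w DX2 DY2 (mkN 0 3 1 1 3 0)"
  by (rule exI[of _ "[DX2, DY1, DX2, DY2, DX2, DY2, DX3, DY2]"]) (simp add: ok_def mkN_simps all_n)

lemma N_031130_DX3_DY1: "\<exists>w. ok NR w DX3 DY1 (mkN 0 3 1 1 3 0)"
  by (rule exI[of _ "[DX3, DY2, DX2, DY2, DX2, DY2, DX2, DY1]"]) (simp add: ok_def mkN_simps all_n)

lemma N_031130_DX3_DY2: "\<exists>w. ok NR w DX3 DY2 (mkN 0 3 1 1 3 0)"
  by (rule exI[of _ "[DX3, DY2, DX2, DY1, DX2, DY2, DX2, DY2]"]) (simp add: ok_def mkN_simps all_n)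

lemma N_031121_DX2_DY1: "\<exists>w. ok NR w DX2 DY1 (mkN 0 3 1 1 2 1)"
  by (rule exI[of _ "[DX2, DY2, DX3, DY2, DX2, DY3, DX2, DY1]"]) (simp add: ok_def mkN_simps all_n)

lemma N_031121_DX2_DY2: "\<exists>w. ok NR w DX2 DY2 (mkN 0 3 1 1 2 1)"
  by (rule exI[of _ "[DX2, DY1, DX2, DY3, DX2, DY2, DX3, DY2]"]) (simp add: ok_def mkN_simps all_n)

lemma N_031121_DX2_DY3: "\<exists>w. ok NR w DX2 DY3 (mkN 0 3 1 1 2 1)"
  by (rule exI[of _ "[DX2, DY1, DX2, DY2, DX3, DY2, DX2, DY3]"]) (simp add: ok_def mkN_simps all_n)

lemma N_031121_DX3_DY1: "\<exists>w. ok NR w DX3 DY1 (mkN 0 3 1 1 2 1)"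
  by (rule exI[of _ "[DX3, DY2, DX2, DY2, DX2, DY3, DX2, DY1]"]) (simp add: ok_def mkN_simps all_n)

lemma N_031121_DX3_DY2: "\<exists>w. ok NR w DX3 DY2 (mkN 0 3 1 1 2 1)"
  by (rule exI[of _ "[DX3, DY2, DX2, DY1, DX2, DY3, DX2, DY2]"]) (simp add: ok_def mkN_simps all_n)

lemma N_031121_DX3_DY3: "\<exists>w. ok NR w DX3 DY3 (mkN 0 3 1 1 2 1)"
  by (rule exI[of _ "[DX3, DY2, DX2, DY1, DX2, DY2, DX2, DY3]"]) (simp add: ok_def mkN_simps all_n)

lemma N_130040_DX1_DY2: "\<exists>w. ok NR w DX1 DY2 (mkN 1 3 0 0 4 0)"
  by (rule exI[of _ "[DX1, DY2, DX2, DY2, DX2, DY2, DX2, DY2]"]) (simp add: ok_def mkN_simps all_n)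

lemma N_130040_DX2_DY2: "\<exists>w. ok NR w DX2 DY2 (mkN 1 3 0 0 4 0)"
  by (rule exI[of _ "[DX2, DY2, DX1, DY2, DX2, DY2, DX2, DY2]"]) (simp add: ok_def mkN_simps all_n)

lemma N_130031_DX1_DY2: "\<exists>w. ok NR w DX1 DY2 (mkN 1 3 0 0 3 1)"
  by (rule exI[of _ "[DX1, DY2, DX2, DY2, DX2, DY3, DX2, DY2]"]) (simp add: ok_def mkN_simps all_n)

lemma N_130031_DX1_DY3: "\<exists>w. ok NR w DX1 DY3 (mkN 1 3 0 0 3 1)"
  by (rule exI[of _ "[DX1, DY2, DX2, DY2, DX2, DY2, DX2, DY3]"]) (simp add: ok_def mkN_simps all_n)

lemma N_130031_DX2_DY2: "\<exists>w. ok NR w DX2 DY2 (mkN 1 3 0 0 3 1)"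
  by (rule exI[of _ "[DX2, DY2, DX1, DY2, DX2, DY3, DX2, DY2]"]) (simp add: ok_def mkN_simps all_n)

lemma N_130031_DX2_DY3: "\<exists>w. ok NR w DX2 DY3 (mkN 1 3 0 0 3 1)"
  by (rule exI[of _ "[DX2, DY2, DX1, DY2, DX2, DY2, DX2, DY3]"]) (simp add: ok_def mkN_simps all_n)

lemma N_130130_DX1_DY1: "\<exists>w. ok NR w DX1 DY1 (mkN 1 3 0 1 3 0)"
  by (rule exI[of _ "[DX1, DY2, DX2, DY2, DX2, DY2, DX2, DY1]"]) (simp add: ok_def mkN_simps all_n)

lemma N_130130_DX1_DY2: "\<exists>w. ok NR w DX1 DY2 (mkN 1 3 0 1 3 0)"
  by (rule exI[of _ "[DX1, DY1, DX2, DY2, DX2, DY2, DX2, DY2]"]) (simp add: ok_def mkN_simps all_n)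

lemma N_130130_DX2_DY1: "\<exists>w. ok NR w DX2 DY1 (mkN 1 3 0 1 3 0)"
  by (rule exI[of _ "[DX2, DY2, DX1, DY2, DX2, DY2, DX2, DY1]"]) (simp add: ok_def mkN_simps all_n)

lemma N_130130_DX2_DY2: "\<exists>w. ok NR w DX2 DY2 (mkN 1 3 0 1 3 0)"
  by (rule exI[of _ "[DX2, DY1, DX1, DY2, DX2, DY2, DX2, DY2]"]) (simp add: ok_def mkN_simps all_n)

lemma N_130121_DX1_DY1: "\<exists>w. ok NR w DX1 DY1 (mkN 1 3 0 1 2 1)"
  by (rule exI[of _ "[DX1, DY2, DX2, DY2, DX2, DY3, DX2, DY1]"]) (simp add: ok_def mkN_simps all_n)

lemma N_130121_DX1_DY2: "\<exists>w. ok NR w DX1 DY2 (mkN 1 3 0 1 2 1)"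
  by (rule exI[of _ "[DX1, DY1, DX2, DY2, DX2, DY3, DX2, DY2]"]) (simp add: ok_def mkN_simps all_n)

lemma N_130121_DX1_DY3: "\<exists>w. ok NR w DX1 DY3 (mkN 1 3 0 1 2 1)"
  by (rule exI[of _ "[DX1, DY1, DX2, DY2, DX2, DY2, DX2, DY3]"]) (simp add: ok_def mkN_simps all_n)

lemma N_130121_DX2_DY1: "\<exists>w. ok NR w DX2 DY1 (mkN 1 3 0 1 2 1)"
  by (rule exI[of _ "[DX2, DY2, DX1, DY2, DX2, DY3, DX2, DY1]"]) (simp add: ok_def mkN_simps all_n)

lemma N_130121_DX2_DY2: "\<exists>w. ok NR w DX2 DY2 (mkN 1 3 0 1 2 1)"
  by (rule exI[of _ "[DX2, DY1, DX1, DY2, DX2, DY3, DX2, DY2]"]) (simp add: ok_def mkN_simps all_n)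

lemma N_130121_DX2_DY3: "\<exists>w. ok NR w DX2 DY3 (mkN 1 3 0 1 2 1)"
  by (rule exI[of _ "[DX2, DY1, DX1, DY2, DX2, DY2, DX2, DY3]"]) (simp add: ok_def mkN_simps all_n)

lemma N_121040_DX1_DY2: "\<exists>w. ok NR w DX1 DY2 (mkN 1 2 1 0 4 0)"
  by (rule exI[of _ "[DX1, DY2, DX2, DY2, DX2, DY2, DX3, DY2]"]) (simp add: ok_def mkN_simps all_n)

lemma N_121040_DX2_DY2: "\<exists>w. ok NR w DX2 DY2 (mkN 1 2 1 0 4 0)"
  by (rule exI[of _ "[DX2, DY2, DX1, DY2, DX2, DY2, DX3, DY2]"]) (simp add: ok_def mkN_simps all_n)

lemma N_121040_DX3_DY2: "\<exists>w. ok NR w DX3 DY2 (mkN 1 2 1 0 4 0)"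
  by (rule exI[of _ "[DX3, DY2, DX1, DY2, DX2, DY2, DX2, DY2]"]) (simp add: ok_def mkN_simps all_n)

lemma N_121031_DX1_DY2: "\<exists>w. ok NR w DX1 DY2 (mkN 1 2 1 0 3 1)"
  by (rule exI[of _ "[DX1, DY2, DX2, DY3, DX2, DY2, DX3, DY2]"]) (simp add: ok_def mkN_simps all_n)

lemma N_121031_DX1_DY3: "\<exists>w. ok NR w DX1 DY3 (mkN 1 2 1 0 3 1)"
  by (rule exI[of _ "[DX1, DY2, DX2, DY2, DX3, DY2, DX2, DY3]"]) (simp add: ok_def mkN_simps all_n)

lemma N_121031_DX2_DY2: "\<exists>w. ok NR w DX2 DY2 (mkN 1 2 1 0 3 1)"
  by (rule exI[of _ "[DX2, DY3, DX2, DY2, DX1, DY2, DX3, DY2]"]) (simp add: ok_def mkN_simps all_n)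

lemma N_121031_DX2_DY3: "\<exists>w. ok NR w DX2 DY3 (mkN 1 2 1 0 3 1)"
  by (rule exI[of _ "[DX2, DY2, DX1, DY2, DX3, DY2, DX2, DY3]"]) (simp add: ok_def mkN_simps all_n)

lemma N_121031_DX3_DY2: "\<exists>w. ok NR w DX3 DY2 (mkN 1 2 1 0 3 1)"
  by (rule exI[of _ "[DX3, DY2, DX1, DY2, DX2, DY3, DX2, DY2]"]) (simp add: ok_def mkN_simps all_n)

lemma N_121031_DX3_DY3: "\<exists>w. ok NR w DX3 DY3 (mkN 1 2 1 0 3 1)"
  by (rule exI[of _ "[DX3, DY2, DX1, DY2, DX2, DY2, DX2, DY3]"]) (simp add: ok_def mkN_simps all_n)

lemma N_121130_DX1_DY1: "\<exists>w. ok NR w DX1 DY1 (mkN 1 2 1 1 3 0)"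
  by (rule exI[of _ "[DX1, DY2, DX2, DY2, DX3, DY2, DX2, DY1]"]) (simp add: ok_def mkN_simps all_n)

lemma N_121130_DX1_DY2: "\<exists>w. ok NR w DX1 DY2 (mkN 1 2 1 1 3 0)"
  by (rule exI[of _ "[DX1, DY1, DX2, DY2, DX2, DY2, DX3, DY2]"]) (simp add: ok_def mkN_simps all_n)

lemma N_121130_DX2_DY1: "\<exists>w. ok NR w DX2 DY1 (mkN 1 2 1 1 3 0)"
  by (rule exI[of _ "[DX2, DY2, DX1, DY2, DX3, DY2, DX2, DY1]"]) (simp add: ok_def mkN_simps all_n)

lemma N_121130_DX2_DY2: "\<exists>w. ok NR w DX2 DY2 (mkN 1 2 1 1 3 0)"
  by (rule exI[of _ "[DX2, DY1, DX1, DY2, DX2, DY2, DX3, DY2]"]) (simp add: ok_def mkN_simps all_n)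

lemma N_121130_DX3_DY1: "\<exists>w. ok NR w DX3 DY1 (mkN 1 2 1 1 3 0)"
  by (rule exI[of _ "[DX3, DY2, DX1, DY2, DX2, DY2, DX2, DY1]"]) (simp add: ok_def mkN_simps all_n)

lemma N_121130_DX3_DY2: "\<exists>w. ok NR w DX3 DY2 (mkN 1 2 1 1 3 0)"
  by (rule exI[of _ "[DX3, DY2, DX1, DY1, DX2, DY2, DX2, DY2]"]) (simp add: ok_def mkN_simps all_n)

lemma N_121121_DX1_DY1: "\<exists>w. ok NR w DX1 DY1 (mkN 1 2 1 1 2 1)"
  by (rule exI[of _ "[DX1, DY2, DX3, DY2, DX2, DY3, DX2, DY1]"]) (simp add: ok_def mkN_simps all_n)

lemma N_121121_DX1_DY2: "\<exists>w. ok NR w DX1 DY2 (mkN 1 2 1 1 2 1)"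
  by (rule exI[of _ "[DX1, DY1, DX2, DY3, DX2, DY2, DX3, DY2]"]) (simp add: ok_def mkN_simps all_n)

lemma N_121121_DX1_DY3: "\<exists>w. ok NR w DX1 DY3 (mkN 1 2 1 1 2 1)"
  by (rule exI[of _ "[DX1, DY1, DX2, DY2, DX3, DY2, DX2, DY3]"]) (simp add: ok_def mkN_simps all_n)

lemma N_121121_DX2_DY1: "\<exists>w. ok NR w DX2 DY1 (mkN 1 2 1 1 2 1)"
  by (rule exI[of _ "[DX2, DY3, DX2, DY2, DX3, DY2, DX1, DY1]"]) (simp add: ok_def mkN_simps all_n)

lemma N_121121_DX2_DY2: "\<exists>w. ok NR w DX2 DY2 (mkN 1 2 1 1 2 1)"
  by (rule exI[of _ "[DX2, DY3, DX2, DY1, DX1, DY2, DX3, DY2]"]) (simp add: ok_def mkN_simps all_n)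

lemma N_121121_DX2_DY3: "\<exists>w. ok NR w DX2 DY3 (mkN 1 2 1 1 2 1)"
  by (rule exI[of _ "[DX2, DY1, DX1, DY2, DX3, DY2, DX2, DY3]"]) (simp add: ok_def mkN_simps all_n)

lemma N_121121_DX3_DY1: "\<exists>w. ok NR w DX3 DY1 (mkN 1 2 1 1 2 1)"
  by (rule exI[of _ "[DX3, DY2, DX1, DY2, DX2, DY3, DX2, DY1]"]) (simp add: ok_def mkN_simps all_n)

lemma N_121121_DX3_DY2: "\<exists>w. ok NR w DX3 DY2 (mkN 1 2 1 1 2 1)"
  by (rule exI[of _ "[DX3, DY2, DX1, DY1, DX2, DY3, DX2, DY2]"]) (simp add: ok_def mkN_simps all_n)

lemma N_121121_DX3_DY3: "\<exists>w. ok NR w DX3 DY3 (mkN 1 2 1 1 2 1)"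
  by (rule exI[of _ "[DX3, DY2, DX1, DY1, DX2, DY2, DX2, DY3]"]) (simp add: ok_def mkN_simps all_n)

lemmas Nbase_facts = N_040040_DX2_DY2 N_040031_DX2_DY2 N_040031_DX2_DY3 N_040130_DX2_DY1 N_040130_DX2_DY2 N_040121_DX2_DY1 N_040121_DX2_DY2 N_040121_DX2_DY3 N_031040_DX2_DY2 N_031040_DX3_DY2 N_031031_DX2_DY2 N_031031_DX2_DY3 N_031031_DX3_DY2 N_031031_DX3_DY3 N_031130_DX2_DY1 N_031130_DX2_DY2 N_031130_DX3_DY1 N_031130_DX3_DY2 N_031121_DX2_DY1 N_031121_DX2_DY2 N_031121_DX2_DY3 N_031121_DX3_DY1 N_031121_DX3_DY2 N_031121_DX3_DY3 N_130040_DX1_DY2 N_130040_DX2_DY2 N_130031_DX1_DY2 N_130031_DX1_DY3 N_130031_DX2_DY2 N_130031_DX2_DY3 N_130130_DX1_DY1 N_130130_DX1_DY2 N_130130_DX2_DY1 N_130130_DX2_DY2 N_130121_DX1_DY1 N_130121_DX1_DY2 N_130121_DX1_DY3 N_130121_DX2_DY1 N_130121_DX2_DY2 N_130121_DX2_DY3 N_121040_DX1_DY2 N_121040_DX2_DY2 N_121040_DX3_DY2 N_121031_DX1_DY2 N_121031_DX1_DY3 N_121031_DX2_DY2 N_121031_DX2_DY3 N_121031_DX3_DY2 N_121031_DX3_DY3 N_121130_DX1_DY1 N_121130_DX1_DY2 N_121130_DX2_DY1 N_121130_DX2_DY2 N_121130_DX3_DY1 N_121130_DX3_DY2 N_121121_DX1_DY1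 N_121121_DX1_DY2 N_121121_DX1_DY3 N_121121_DX2_DY1 N_121121_DX2_DY2 N_121121_DX2_DY3 N_121121_DX3_DY1 N_121121_DX3_DY2 N_121121_DX3_DY3

lemma N_base:
  assumes "a1 \<le> 1" "a3 \<le> 1" "b1 \<le> 1" "b3 \<le> 1" "a1 + a2 + a3 = 4" "b1 + b2 + b3 = 4"
    "st \<in> {DX1, DX2, DX3}" "en \<in> {DY1, DY2, DY3}"
    "mkN a1 a2 a3 b1 b2 b3 st \<ge> 1" "mkN a1 a2 a3 b1 b2 b3 en \<ge> 1"
  shows "\<exists>w. ok NR w st en (mkN a1 a2 a3 b1 b2 b3)"
proof -
  have "a1 \<in> {0,1}" "a3 \<in> {0,1}" "b1 \<in> {0,1}" "b3 \<in> {0,1}"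
    using assms by auto
  moreover have "a2 = 4 - a1 - a3" "b2 = 4 - b1 - b3" using assms by auto
  ultimately show ?thesis using assms(7-10)
    by (auto simp: mkN_simps Nbase_facts Nbase_facts[unfolded One_nat_def])
qed

lemma N_words:
  "a1 + a2 + a3 = N \<Longrightarrow> b1 + b2 + b3 = N \<Longrightarrow> 4 \<le> N \<Longrightarrow> a1 + 3 \<le> N \<Longrightarrow> b1 + 3 \<le> N \<Longrightarrow>
   a3 \<le> 1 \<Longrightarrow> b3 \<le> 1 \<Longrightarrow> st \<in> {DX1, DX2, DX3} \<Longrightarrow> en \<in> {DY1, DY2, DY3} \<Longrightarrow>
   mkN a1 a2 a3 b1 b2 b3 st \<ge> 1 \<Longrightarrow> mkN a1 a2 a3 b1 b2 b3 en \<ge> 1 \<Longrightarrow>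
   \<exists>w. ok NR w st en (mkN a1 a2 a3 b1 b2 b3)"
proof (induction N arbitrary: a1 a2 a3 b1 b2 b3)
  case 0
  then show ?case by simp
next
  case (Suc m)
  note P = Suc.prems
  show ?case
  proof (cases "m = 3")
    case True
    then show ?thesis using P by (intro N_base) auto
  next
    case False
    then have m4: "m \<ge> 4" using P by auto
    consider (A) "a1 + 3 = Suc m" "b1 + 3 = Suc m" | (B) "a1 + 3 = Suc m" "b1 + 3 \<noteq> Suc m"
      | (C) "a1 + 3 \<noteq> Suc m" "b1 + 3 = Suc m" | (D) "a1 + 3 \<noteq> Suc m" "b1 + 3 \<noteq> Suc m" by blast
    then show ?thesis
    proof cases
      case A
      have "\<exists>w. ok NR w st en (mkN (a1 - 1) a2 a3 (b1 - 1) b2 b3)"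
      proof (rule Suc.IH)
        show "mkN (a1 - 1) a2 a3 (b1 - 1) b2 b3 st \<ge> 1" using P A m4 by (auto simp: mkN_simps)
        show "mkN (a1 - 1) a2 a3 (b1 - 1) b2 b3 en \<ge> 1" using P A m4 by (auto simp: mkN_simps)
      qed (use P A m4 in auto)
      then show ?thesis
      proof (rule step[where x = DX1 and y = DY1])
        show "mkN a1 a2 a3 b1 b2 b3 = (mkN (a1 - 1) a2 a3 (b1 - 1) b2 b3)
          (DX1 := Suc (mkN (a1 - 1) a2 a3 (b1 - 1) b2 b3 DX1), DY1 := Suc (mkN (a1 - 1) a2 a3 (b1 - 1) b2 b3 DY1))"
          using P A m4 by (auto simp: fun_eq_iff mkN_def split: nc.splits)
      qed (use P A m4 in \<open>auto simp: mkN_simps\<close>)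
    next
      case B
      have "\<exists>w. ok NR w st en (mkN (a1 - 1) a2 a3 b1 (b2 - 1) b3)"
      proof (rule Suc.IH)
        show "mkN (a1 - 1) a2 a3 b1 (b2 - 1) b3 st \<ge> 1" using P B m4 by (auto simp: mkN_simps)
        show "mkN (a1 - 1) a2 a3 b1 (b2 - 1) b3 en \<ge> 1" using P B m4 by (auto simp: mkN_simps)
      qed (use P B m4 in auto)
      then show ?thesis
      proof (rule step[where x = DX1 and y = DY2])
        show "mkN a1 a2 a3 b1 b2 b3 = (mkN (a1 - 1) a2 a3 b1 (b2 - 1) b3)
          (DX1 := Suc (mkN (a1 - 1) a2 a3 b1 (b2 - 1) b3 DX1), DY2 := Suc (mkN (a1 - 1) a2 a3 b1 (b2 - 1) b3 DY2))"
          using P B m4 by (auto simp: fun_eq_iff mkN_def split: nc.splits)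
      qed (use P B m4 in \<open>auto simp: mkN_simps\<close>)
    next
      case C
      have "\<exists>w. ok NR w st en (mkN a1 (a2 - 1) a3 (b1 - 1) b2 b3)"
      proof (rule Suc.IH)
        show "mkN a1 (a2 - 1) a3 (b1 - 1) b2 b3 st \<ge> 1" using P C m4 by (auto simp: mkN_simps)
        show "mkN a1 (a2 - 1) a3 (b1 - 1) b2 b3 en \<ge> 1" using P C m4 by (auto simp: mkN_simps)
      qed (use P C m4 in auto)
      then show ?thesis
      proof (rule step[where x = DX2 and y = DY1])
        show "mkN a1 a2 a3 b1 b2 b3 = (mkN a1 (a2 - 1) a3 (b1 - 1) b2 b3)
          (DX2 := Suc (mkN a1 (a2 - 1) a3 (b1 - 1) b2 b3 DX2), DY1 := Suc (mkN a1 (a2 - 1) a3 (b1 - 1) b2 b3 DY1))"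
          using P C m4 by (auto simp: fun_eq_iff mkN_def split: nc.splits)
      qed (use P C m4 in \<open>auto simp: mkN_simps\<close>)
    next
      case D
      have "\<exists>w. ok NR w st en (mkN a1 (a2 - 1) a3 b1 (b2 - 1) b3)"
      proof (rule Suc.IH)
        show "mkN a1 (a2 - 1) a3 b1 (b2 - 1) b3 st \<ge> 1" using P D m4 by (auto simp: mkN_simps)
        show "mkN a1 (a2 - 1) a3 b1 (b2 - 1) b3 en \<ge> 1" using P D m4 by (auto simp: mkN_simps)
      qed (use P D m4 in auto)
      then show ?thesis
      proof (rule step[where x = DX2 and y = DY2])
        show "mkN a1 a2 a3 b1 b2 b3 = (mkN a1 (a2 - 1) a3 b1 (b2 - 1) b3)
          (DX2 := Suc (mkN a1 (a2 - 1) a3 b1 (b2 - 1) b3 DX2), DY2 := Suc (mkN a1 (a2 - 1) a3 b1 (b2 - 1) b3 DY2))"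
          using P D m4 by (auto simp: fun_eq_iff mkN_def split: nc.splits)
      qed (use P D m4 in \<open>auto simp: mkN_simps\<close>)
    qed
  qed
qed

lemma hb_generic:
  fixes f :: "'v \<Rightarrow> 'c"
  assumes fin: "finite (X' \<union> Y')"
    and E: "\<And>a b. E a b = R (f a) (f b)"
    and dif: "\<And>x y. x \<in> X' \<Longrightarrow> y \<in> Y' \<Longrightarrow> f x \<noteq> f y"
    and words: "\<And>u v. u \<in> X' \<Longrightarrow> v \<in> Y' \<Longrightarrow>
        \<exists>w. ok R w (f u) (f v) (\<lambda>c. card {x\<in>X' \<union> Y'. f x = c})"
  shows "hamilton_biconnected X' Y' E"
  unfolding hamilton_biconnected_def
proof (intro ballI)
  fix u v assume uv: "u \<in> X'" "v \<in> Y'"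
  from words[OF uv] obtain w where "ok R w (f u) (f v) (\<lambda>c. card {x\<in>X' \<union> Y'. f x = c})" by blast
  from realize[OF fin _ _ dif[OF uv] E this] uv
  show "\<exists>xs. ham_path E (X' \<union> Y') xs \<and> xs \<noteq> [] \<and> hd xs = u \<and> last xs = v" by blast
qed

lemma W_parts:
  assumes "finite W" "W \<subseteq> X \<union> Y" "X \<inter> Y = {}" "card (W \<inter> X) = card (W \<inter> Y)" "card W = 2 * p"
  shows "card (W \<inter> X) = p" "card (W \<inter> Y) = p"
proof -
  have "W = (W \<inter> X) \<union> (W \<inter> Y)" using assms(2) by auto
  then have "card W = card (W \<inter> X) + card (W \<inter> Y)"
    using assms(1,3) by (metis card_Un_disjoint finite_Int inf_commute inf_left_commute inf_bot_right)
  then show "card (W \<inter> X) = p" "card (W \<inter> Y) = p" using assms(4,5) by auto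
qed

lemma card_diff_W:
  assumes "finite X" "card (W \<inter> X) = p"
  shows "card (X - W) = card X - p"
proof -
  have "card (X - W) = card X - card (X \<inter> W)" using assms(1) by (simp add: card_Diff_subset_Int)
  then show ?thesis using assms(2) by (simp add: Int_commute)
qed

lemma card3:
  assumes "finite A" "\<And>x. x \<in> A \<Longrightarrow> f x = c1 \<or> f x = c2 \<or> f x = c3"
    "c1 \<noteq> c2" "c1 \<noteq> c3" "c2 \<noteq> c3"
  shows "card A = card {x\<in>A. f x = c1} + card {x\<in>A. f x = c2} + card {x\<in>A. f x = c3}"
proof -
  have "A = {x\<in>A. f x = c1} \<union> {x\<in>A. f x = c2} \<union> {x\<in>A. f x = c3}" using assms(2) by auto
  moreover have "card ({x\<in>A. f x = c1} \<union> {x\<in>A. f x = c2} \<union> {x\<in>A. f x = c3})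
      = card ({x\<in>A. f x = c1} \<union> {x\<in>A. f x = c2}) + card {x\<in>A. f x = c3}"
    by (rule card_Un_disjoint) (use assms in auto)
  moreover have "card ({x\<in>A. f x = c1} \<union> {x\<in>A. f x = c2})
      = card {x\<in>A. f x = c1} + card {x\<in>A. f x = c2}"
    by (rule card_Un_disjoint) (use assms in auto)
  ultimately show ?thesis by simp
qed

lemma card_img_less: "inj g \<Longrightarrow> card {g i | i. i < k} = k"
proof -
  assume "inj g"
  moreover have "{g i | i. i < k} = g ` {..<k}" by auto
  ultimately show ?thesis by (simp add: card_image inj_on_subset)
qed

fun mcl :: "mvert \<Rightarrow> mc" where
  "mcl (MX1 _) = CX1" | "mcl MX0 = CX0" | "mcl (MX3 _) = CX3"
| "mcl (MY1 _) = CY1" | "mcl MY0 = CY0" | "mcl (MY3 _) = CY3"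

lemma M_adj_cl: "M_adj a b = MR (mcl a) (mcl b)"
  by (cases a; cases b) (simp_all add: M_adj_def)

lemma M_part:
  assumes st: "s \<ge> 2" "t \<ge> 1" "n = s + t + p + 1"
  shows "hamilton_biconnected_2p p (M_X n n s t) (M_Y n n s t) M_adj"
  unfolding hamilton_biconnected_2p_def
proof (intro allI impI)
  fix W
  let ?X = "M_X n n s t" and ?Y = "M_Y n n s t"
  assume "W \<subseteq> ?X \<union> ?Y \<and> finite W \<and> balanced_set ?X ?Y W \<and> card W = 2 * p"
  then have W: "W \<subseteq> ?X \<union> ?Y" "finite W" "card (W \<inter> ?X) = card (W \<inter> ?Y)" "card W = 2 * p"
    unfolding balanced_set_def by auto
  have disj: "?X \<inter> ?Y = {}" by (auto simp: M_X_def M_Y_def)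
  have finX: "finite ?X" and finY: "finite ?Y" by (auto simp: M_X_def M_Y_def)
  have WX: "card (W \<inter> ?X) = p" and WY: "card (W \<inter> ?Y) = p" using W_parts[OF W(2,1) disj W(3,4)] by auto
  have clX: "\<And>x. x \<in> ?X \<Longrightarrow> mcl x = CX1 \<or> mcl x = CX0 \<or> mcl x = CX3" by (auto simp: M_X_def)
  have clY: "\<And>x. x \<in> ?Y \<Longrightarrow> mcl x = CY1 \<or> mcl x = CY0 \<or> mcl x = CY3" by (auto simp: M_Y_def)
  have X1: "{x\<in>?X. mcl x = CX1} = {MX1 i | i. i < s - 1}" by (auto simp: M_X_def)
  have X0: "{x\<in>?X. mcl x = CX0} = {MX0}" by (auto simp: M_X_def)
  have X3: "{x\<in>?X. mcl x = CX3} = {MX3 i | i. i < n - s}" by (auto simp: M_X_def)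
  have Y1: "{x\<in>?Y. mcl x = CY1} = {MY1 i | i. i < n - t - 1}" by (auto simp: M_Y_def)
  have Y0: "{x\<in>?Y. mcl x = CY0} = {MY0}" by (auto simp: M_Y_def)
  have Y3: "{x\<in>?Y. mcl x = CY3} = {MY3 i | i. i < t}" by (auto simp: M_Y_def)
  have cX: "card ?X = n"
    using card3[OF finX clX] X1 X0 X3 card_img_less[of MX1] card_img_less[of MX3] st
    by (simp add: inj_def)
  have cY: "card ?Y = n"
    using card3[OF finY clY] Y1 Y0 Y3 card_img_less[of MY1] card_img_less[of MY3] st
    by (simp add: inj_def)
  let ?X' = "?X - W" and ?Y' = "?Y - W"
  let ?V = "?X' \<union> ?Y'"
  have finV: "finite ?V" using finX finY by auto
  have cX': "card ?X' = n - p" using card_diff_W[OF finX WX] cX by simp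
  have cY': "card ?Y' = n - p" using card_diff_W[OF finY WY] cY by simp
  define cnt where "cnt c = card {x\<in>?V. mcl x = c}" for c
  have VX: "\<And>c. c \<in> {CX1, CX0, CX3} \<Longrightarrow> {x\<in>?V. mcl x = c} = {x\<in>?X'. mcl x = c}"
    using clY by fastforce
  have VY: "\<And>c. c \<in> {CY1, CY0, CY3} \<Longrightarrow> {x\<in>?V. mcl x = c} = {x\<in>?Y'. mcl x = c}"
    using clX by fastforce
  have sumX: "cnt CX1 + cnt CX0 + cnt CX3 = n - p"
    using card3[of ?X' mcl CX1 CX0 CX3] finX clX cX' VX unfolding cnt_def by simp
  have sumY: "cnt CY1 + cnt CY0 + cnt CY3 = n - p"
    using card3[of ?Y' mcl CY1 CY0 CY3] finY clY cY' VY unfolding cnt_def by simp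
  have le: "\<And>c. card {x\<in>?X'. mcl x = c} \<le> card {x\<in>?X. mcl x = c}"
    "\<And>c. card {x\<in>?Y'. mcl x = c} \<le> card {x\<in>?Y. mcl x = c}"
    using finX finY by (auto intro!: card_mono)
  have a1: "cnt CX1 \<le> s - 1" using le(1)[of CX1] X1 VX[of CX1] card_img_less[of MX1 "s - 1"]
    unfolding cnt_def by (simp add: inj_def)
  have a0: "cnt CX0 \<le> 1" using le(1)[of CX0] X0 VX[of CX0] unfolding cnt_def by simp
  have b3: "cnt CY3 \<le> t" using le(2)[of CY3] Y3 VY[of CY3] card_img_less[of MY3 t]
    unfolding cnt_def by (simp add: inj_def)
  have b0: "cnt CY0 \<le> 1" using le(2)[of CY0] Y0 VY[of CY0] unfolding cnt_def by simp
  have cnt_eq: "(\<lambda>c. card {x\<in>?V. mcl x = c}) =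
      mkM (cnt CX1) (cnt CX0) (cnt CX3) (cnt CY1) (cnt CY0) (cnt CY3)"
    by (rule ext) (simp add: cnt_def mkM_def split: mc.splits)
  have pos: "\<And>u. u \<in> ?V \<Longrightarrow> cnt (mcl u) \<ge> 1"
  proof -
    fix u assume "u \<in> ?V"
    then have ne: "{x\<in>?V. mcl x = mcl u} \<noteq> {}" by auto
    have fin': "finite {x\<in>?V. mcl x = mcl u}" by (rule finite_subset[OF _ finV]) auto
    have "0 < card {x\<in>?V. mcl x = mcl u}" using fin' ne card_gt_0_iff by blast
    then show "cnt (mcl u) \<ge> 1" unfolding cnt_def by simp
  qed
  show "hamilton_biconnected ?X' ?Y' M_adj"
  proof (rule hb_generic[where f = mcl and R = MR])
    show "finite ?V" by (rule finV)
    show "\<And>a b. M_adj a b = MR (mcl a) (mcl b)" by (rule M_adj_cl)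
    show "\<And>x y. x \<in> ?X' \<Longrightarrow> y \<in> ?Y' \<Longrightarrow> mcl x \<noteq> mcl y" using clX clY by fastforce
    fix u v assume uv: "u \<in> ?X'" "v \<in> ?Y'"
    have "\<exists>w. ok MR w (mcl u) (mcl v) (mkM (cnt CX1) (cnt CX0) (cnt CX3) (cnt CY1) (cnt CY0) (cnt CY3))"
    proof (rule M_words[where N = "n - p"])
      show "mcl u \<in> {CX1, CX0, CX3}" using clX uv by auto
      show "mcl v \<in> {CY1, CY0, CY3}" using clY uv by auto
      show "mkM (cnt CX1) (cnt CX0) (cnt CX3) (cnt CY1) (cnt CY0) (cnt CY3) (mcl u) \<ge> 1"
        using pos[of u] uv cnt_eq unfolding cnt_def by (metis UnI1)
      show "mkM (cnt CX1) (cnt CX0) (cnt CX3) (cnt CY1) (cnt CY0) (cnt CY3) (mcl v) \<ge> 1"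
        using pos[of v] uv cnt_eq unfolding cnt_def by (metis UnI2)
    qed (use sumX sumY a1 a0 b3 b0 st in auto)
    then show "\<exists>w. ok MR w (mcl u) (mcl v) (\<lambda>c. card {x\<in>?V. mcl x = c})" using cnt_eq by simp
  qed
qed

fun ncl :: "nvert \<Rightarrow> nc" where
  "ncl (NX1 _) = DX1" | "ncl (NX2 _) = DX2" | "ncl NX3 = DX3"
| "ncl (NY1 _) = DY1" | "ncl (NY2 _) = DY2" | "ncl NY3 = DY3"

lemma N_adj_cl: "N_adj a b = NR (ncl a) (ncl b)"
  by (cases a; cases b) (simp_all add: N_adj_def)

lemma N_part:
  assumes st: "n \<ge> p + 6"
  shows "hamilton_biconnected_2p p (N_X n p) (N_Y n p) N_adj"
  unfolding hamilton_biconnected_2p_def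
proof (intro allI impI)
  fix W
  let ?X = "N_X n p" and ?Y = "N_Y n p"
  assume "W \<subseteq> ?X \<union> ?Y \<and> finite W \<and> balanced_set ?X ?Y W \<and> card W = 2 * p"
  then have W: "W \<subseteq> ?X \<union> ?Y" "finite W" "card (W \<inter> ?X) = card (W \<inter> ?Y)" "card W = 2 * p"
    unfolding balanced_set_def by auto
  have disj: "?X \<inter> ?Y = {}" by (auto simp: N_X_def N_Y_def)
  have finX: "finite ?X" and finY: "finite ?Y" by (auto simp: N_X_def N_Y_def)
  have WX: "card (W \<inter> ?X) = p" and WY: "card (W \<inter> ?Y) = p" using W_parts[OF W(2,1) disj W(3,4)] by auto
  have clX: "\<And>x. x \<in> ?X \<Longrightarrow> ncl x = DX1 \<or> ncl x = DX2 \<or> ncl x = DX3" by (auto simp: N_X_def)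
  have clY: "\<And>x. x \<in> ?Y \<Longrightarrow> ncl x = DY1 \<or> ncl x = DY2 \<or> ncl x = DY3" by (auto simp: N_Y_def)
  have X1: "{x\<in>?X. ncl x = DX1} = {NX1 i | i. i < n - p - 3}" by (auto simp: N_X_def)
  have X0: "{x\<in>?X. ncl x = DX2} = {NX2 i | i. i < p + 2}" by (auto simp: N_X_def)
  have X3: "{x\<in>?X. ncl x = DX3} = {NX3}" by (auto simp: N_X_def)
  have Y1: "{x\<in>?Y. ncl x = DY1} = {NY1 i | i. i < n - p - 3}" by (auto simp: N_Y_def)
  have Y0: "{x\<in>?Y. ncl x = DY2} = {NY2 i | i. i < p + 2}" by (auto simp: N_Y_def)
  have Y3: "{x\<in>?Y. ncl x = DY3} = {NY3}" by (auto simp: N_Y_def)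
  have cX: "card ?X = n"
    using card3[OF finX clX] X1 X0 X3 card_img_less[of NX1] card_img_less[of NX2] st
    by (simp add: inj_def)
  have cY: "card ?Y = n"
    using card3[OF finY clY] Y1 Y0 Y3 card_img_less[of NY1] card_img_less[of NY2] st
    by (simp add: inj_def)
  let ?X' = "?X - W" and ?Y' = "?Y - W"
  let ?V = "?X' \<union> ?Y'"
  have finV: "finite ?V" using finX finY by auto
  have cX': "card ?X' = n - p" using card_diff_W[OF finX WX] cX by simp
  have cY': "card ?Y' = n - p" using card_diff_W[OF finY WY] cY by simp
  define cnt where "cnt c = card {x\<in>?V. ncl x = c}" for c
  have VX: "\<And>c. c \<in> {DX1, DX2, DX3} \<Longrightarrow> {x\<in>?V. ncl x = c} = {x\<in>?X'. ncl x = c}"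
    using clY by fastforce
  have VY: "\<And>c. c \<in> {DY1, DY2, DY3} \<Longrightarrow> {x\<in>?V. ncl x = c} = {x\<in>?Y'. ncl x = c}"
    using clX by fastforce
  have sumX: "cnt DX1 + cnt DX2 + cnt DX3 = n - p"
    using card3[of ?X' ncl DX1 DX2 DX3] finX clX cX' VX unfolding cnt_def by simp
  have sumY: "cnt DY1 + cnt DY2 + cnt DY3 = n - p"
    using card3[of ?Y' ncl DY1 DY2 DY3] finY clY cY' VY unfolding cnt_def by simp
  have le: "\<And>c. card {x\<in>?X'. ncl x = c} \<le> card {x\<in>?X. ncl x = c}"
    "\<And>c. card {x\<in>?Y'. ncl x = c} \<le> card {x\<in>?Y. ncl x = c}"
    using finX finY by (auto intro!: card_mono)
  have a1: "cnt DX1 \<le> n - p - 3" using le(1)[of DX1] X1 VX[of DX1] card_img_less[of NX1 "n - p - 3"]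
    unfolding cnt_def by (simp add: inj_def)
  have a0: "cnt DX3 \<le> 1" using le(1)[of DX3] X3 VX[of DX3] unfolding cnt_def by simp
  have b3: "cnt DY1 \<le> n - p - 3" using le(2)[of DY1] Y1 VY[of DY1] card_img_less[of NY1 "n - p - 3"]
    unfolding cnt_def by (simp add: inj_def)
  have b0: "cnt DY3 \<le> 1" using le(2)[of DY3] Y3 VY[of DY3] unfolding cnt_def by simp
  have cnt_eq: "(\<lambda>c. card {x\<in>?V. ncl x = c}) =
      mkN (cnt DX1) (cnt DX2) (cnt DX3) (cnt DY1) (cnt DY2) (cnt DY3)"
    by (rule ext) (simp add: cnt_def mkN_def split: nc.splits)
  have pos: "\<And>u. u \<in> ?V \<Longrightarrow> cnt (ncl u) \<ge> 1"
  proof -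
    fix u assume "u \<in> ?V"
    then have ne: "{x\<in>?V. ncl x = ncl u} \<noteq> {}" by auto
    have fin': "finite {x\<in>?V. ncl x = ncl u}" by (rule finite_subset[OF _ finV]) auto
    have "0 < card {x\<in>?V. ncl x = ncl u}" using fin' ne card_gt_0_iff by blast
    then show "cnt (ncl u) \<ge> 1" unfolding cnt_def by simp
  qed
  show "hamilton_biconnected ?X' ?Y' N_adj"
  proof (rule hb_generic[where f = ncl and R = NR])
    show "finite ?V" by (rule finV)
    show "\<And>a b. N_adj a b = NR (ncl a) (ncl b)" by (rule N_adj_cl)
    show "\<And>x y. x \<in> ?X' \<Longrightarrow> y \<in> ?Y' \<Longrightarrow> ncl x \<noteq> ncl y" using clX clY by fastforce
    fix u v assume uv: "u \<in> ?X'" "v \<in> ?Y'"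
    have "\<exists>w. ok NR w (ncl u) (ncl v) (mkN (cnt DX1) (cnt DX2) (cnt DX3) (cnt DY1) (cnt DY2) (cnt DY3))"
    proof (rule N_words[where N = "n - p"])
      show "ncl u \<in> {DX1, DX2, DX3}" using clX uv by auto
      show "ncl v \<in> {DY1, DY2, DY3}" using clY uv by auto
      show "mkN (cnt DX1) (cnt DX2) (cnt DX3) (cnt DY1) (cnt DY2) (cnt DY3) (ncl u) \<ge> 1"
        using pos[of u] uv cnt_eq unfolding cnt_def by (metis UnI1)
      show "mkN (cnt DX1) (cnt DX2) (cnt DX3) (cnt DY1) (cnt DY2) (cnt DY3) (ncl v) \<ge> 1"
        using pos[of v] uv cnt_eq unfolding cnt_def by (metis UnI2)
    qed (use sumX sumY a1 a0 b3 b0 st in auto)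
    then show "\<exists>w. ok NR w (ncl u) (ncl v) (\<lambda>c. card {x\<in>?V. ncl x = c})" using cnt_eq by simp
  qed
qed

theorem lemma2p7:
  shows "(\<forall>p s t n :: nat. s \<ge> 2 \<and> t \<ge> 1 \<and> n = s + t + p + 1 \<longrightarrow>
            hamilton_biconnected_2p p (M_X n n s t) (M_Y n n s t) M_adj)
       \<and> (\<forall>p n :: nat. n \<ge> p + 6 \<longrightarrow>
            hamilton_biconnected_2p p (N_X n p) (N_Y n p) N_adj)"
  using M_part N_part by blast

end
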